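(* For the $k$-server problem on the line, for every instance $I$, every prediction, and every $\lambda\in(0,1]$, there is $c\ge0$ depending only on the initial configuration such that $\mathrm{LambdaDC}(I)\le\beta(k)\cdot\mathrm{OPT}(I)+c$, where $\beta(k)=\sum_{i=0}^{k-1}\lambda^{-i}$.
   Context: The $k$-server problem on the line: servers on $\mathbb{R}$ labeled $s_1\le\dots\le s_k$, requests revealed online and served by moving a server to them; cost = total distance moved; $\mathrm{OPT}(I)$ is the optimal offline cost. A prediction gives for each request $r_t$ an index $p_t\in\{1,\dots,k\}$. LambdaDC with parameter $\lambda$: if $r_t<s_1$ or $r_t>s_k$, move only the closest server; if $s_i<r_t<s_{i+1}$ and $p_t\le i$, move $s_i$ at speed $1$ and $s_{i+1}$ at speed $\lambda$ towards $r_t$ until one reaches it; if $p_t\ge i+1$, the speeds are swapped. *)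

theory Defs
  imports Complex_Main
begin

text \<open>A configuration is a function s :: nat => real, of which
  only the values s 1, ..., s k (the server positions, labelled so that
  s 1 <= ... <= s k) are relevant. An instance (for a fixed initial configuration)
  is a list of pairs (r_t, p_t): the request r_t and its predicted index p_t.\<close>

definition config_dist :: "nat \<Rightarrow> (nat \<Rightarrow> real) \<Rightarrow> (nat \<Rightarrow> real) \<Rightarrow> real" where
  "config_dist k s s' = (\<Sum>j\<in>{1..k}. \<bar>s' j - s j\<bar>)"

definition lambda_dc_step ::
  "real \<Rightarrow> nat \<Rightarrow> (nat \<Rightarrow> real) \<Rightarrow> real \<Rightarrow> nat \<Rightarrow> (nat \<Rightarrow> real)" where
  "lambda_dc_step lam k s r p =
     (if r < s 1 then s(1 := r)
      else if s k < r then s(k := r)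
      else if (\<exists>i. 1 \<le> i \<and> i < k \<and> s i < r \<and> r < s (Suc i)) then
        (let i = (LEAST i. 1 \<le> i \<and> i < k \<and> s i < r \<and> r < s (Suc i)) in
         if p \<le> i then
           (let t = min (r - s i) ((s (Suc i) - r) / lam)
            in s(i := s i + t, Suc i := s (Suc i) - lam * t))
         else
           (let t = min ((r - s i) / lam) (s (Suc i) - r)
            in s(i := s i + lam * t, Suc i := s (Suc i) - t)))
      else s)"

fun lambda_dc_cost ::
  "real \<Rightarrow> nat \<Rightarrow> (nat \<Rightarrow> real) \<Rightarrow> (real \<times> nat) list \<Rightarrow> real" where
  "lambda_dc_cost lam k s [] = 0"
| "lambda_dc_cost lam k s ((r, p) # I) =
     (let s' = lambda_dc_step lam k s r p
      in config_dist k s s' + lambda_dc_cost lam k s' I)"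

definition valid_schedule ::
  "nat \<Rightarrow> (nat \<Rightarrow> real) \<Rightarrow> real list \<Rightarrow> (nat \<Rightarrow> nat \<Rightarrow> real) \<Rightarrow> bool" where
  "valid_schedule k s0 rs C \<longleftrightarrow>
     (\<forall>j\<in>{1..k}. C 0 j = s0 j) \<and>
     (\<forall>t\<in>{1..length rs}. \<exists>j\<in>{1..k}. C t j = rs ! (t - 1))"

definition schedule_cost :: "nat \<Rightarrow> nat \<Rightarrow> (nat \<Rightarrow> nat \<Rightarrow> real) \<Rightarrow> real" where
  "schedule_cost k n C = (\<Sum>t\<in>{1..n}. config_dist k (C (t - 1)) (C t))"

definition opt_cost :: "nat \<Rightarrow> (nat \<Rightarrow> real) \<Rightarrow> real list \<Rightarrow> real" where
  "opt_cost k s0 rs =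
     Inf {schedule_cost k (length rs) C | C. valid_schedule k s0 rs C}"

end

theory Submission
  imports Defs
begin


definition ld :: "real list \<Rightarrow> real list \<Rightarrow> real" where
  "ld xs ys = (\<Sum>i<length xs. \<bar>xs ! i - ys ! i\<bar>)"

lemma ld_Nil[simp]: "ld [] ys = 0" by (simp add: ld_def)

lemma ld_Cons[simp]: "ld (x # xs) (y # ys) = \<bar>x - y\<bar> + ld xs ys"
  unfolding ld_def by (simp only: length_Cons sum.lessThan_Suc_shift) simp

lemma insort_ld:
  assumes "length A = length B" "sorted A" "sorted B"
  shows "ld (insort x A) (insort y B) \<le> \<bar>x - y\<bar> + ld A B"
  using assms
proof (induction A B arbitrary: x y rule: list_induct2)
  case Nil
  then show ?case by simp
next
  case (Cons a A b B)
  have sA: "sorted A" and sB: "sorted B" using Cons.prems by auto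
  have iA: "insort a A = a # A" using Cons.prems by (intro insort_is_Cons) auto
  have iB: "insort b B = b # B" using Cons.prems by (intro insort_is_Cons) auto
  show ?case
  proof (cases "x \<le> a")
    case xa: True
    show ?thesis
    proof (cases "y \<le> b")
      case True
      then show ?thesis using xa by simp
    next
      case False
      have "ld (insort a A) (insort y B) \<le> \<bar>a - y\<bar> + ld A B"
        using Cons.IH sA sB by blast
      moreover have "\<bar>x - b\<bar> + \<bar>a - y\<bar> \<le> \<bar>x - y\<bar> + \<bar>a - b\<bar>" using xa False by linarith
      ultimately show ?thesis using xa False iA by simp
    qed
  next
    case xa: False
    show ?thesis
    proof (cases "y \<le> b")
      case True
      have "ld (insort x A) (insort b B) \<le> \<bar>x - b\<bar> + ld A B"
        using Cons.IH sA sB by blast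
      moreover have "\<bar>a - y\<bar> + \<bar>x - b\<bar> \<le> \<bar>x - y\<bar> + \<bar>a - b\<bar>" using xa True by linarith
      ultimately show ?thesis using xa True iB by simp
    next
      case False
      have "ld (insort x A) (insort y B) \<le> \<bar>x - y\<bar> + ld A B"
        using Cons.IH sA sB by blast
      then show ?thesis using xa False by simp
    qed
  qed
qed

lemma sort_ld:
  assumes "length xs = length ys"
  shows "ld (sort xs) (sort ys) \<le> ld xs ys"
  using assms
proof (induction xs ys rule: list_induct2)
  case Nil
  then show ?case by simp
next
  case (Cons x xs y ys)
  have "ld (insort x (sort xs)) (insort y (sort ys)) \<le> \<bar>x - y\<bar> + ld (sort xs) (sort ys)"
    by (rule insort_ld) (use Cons in auto)
  then show ?case using Cons by simp
qed



locale lk =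
  fixes k :: nat and lam :: real
  assumes k1: "1 \<le> k" and lp: "0 < lam" and l1: "lam \<le> 1"
begin

definition "mu = inverse lam"

lemma mu_ge1: "1 \<le> mu"
  unfolding mu_def using lp l1 by (simp add: one_le_inverse)

lemma mu_lam: "mu * lam = 1"
  unfolding mu_def using lp by simp

definition P :: "nat \<Rightarrow> nat \<Rightarrow> real" where
  "P x y = (if x < y then mu ^ (y - x) else 0)"
definition A :: "nat \<Rightarrow> real" where "A i = (\<Sum>x\<in>{1..k}. P x i)"
definition R :: "nat \<Rightarrow> real" where "R i = (\<Sum>y\<in>{1..k}. P i y)"
definition G :: "nat \<Rightarrow> real" where "G n = (\<Sum>d<n. mu ^ d)"
definition cc :: "nat \<Rightarrow> real" where "cc i = 1 + A i + R i"
definition kap :: "nat \<Rightarrow> real" where "kap i = A i - R i"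

lemma P_nonneg: "0 \<le> P x y"
  unfolding P_def using mu_ge1 by auto
lemma A_nonneg: "0 \<le> A i" unfolding A_def by (intro sum_nonneg P_nonneg)
lemma R_nonneg: "0 \<le> R i" unfolding R_def by (intro sum_nonneg P_nonneg)
lemma cc_nonneg: "0 \<le> cc i" unfolding cc_def using A_nonneg[of i] R_nonneg[of i]
  by linarith

lemma A_1: "A 1 = 0" unfolding A_def P_def by (intro sum.neutral) auto
lemma R_k: "R k = 0" unfolding R_def P_def by (intro sum.neutral) auto

lemma A_Suc: assumes "1 \<le> i" "i \<le> k" shows "A (Suc i) = mu * (A i + 1)"
proof -
  have pw: "P x (Suc i) = mu * P x i + mu * (if x = i then 1 else 0)" for x
  proof (cases "x < i")
    case True
    then have "Suc i - x = Suc (i - x)" by simp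
    then show ?thesis using True by (simp add: P_def)
  next
    case False
    then show ?thesis by (cases "x = i") (auto simp: P_def)
  qed
  have "A (Suc i) = (\<Sum>x\<in>{1..k}. mu * P x i + mu * (if x = i then 1 else 0))"
    unfolding A_def using pw by simp
  also have "\<dots> = mu * A i + mu * (\<Sum>x\<in>{1..k}. (if x = i then 1 else 0))"
    unfolding A_def by (simp only: sum.distrib sum_distrib_left)
  also have "(\<Sum>x\<in>{1..k}. (if x = i then 1 else 0)) = (1::real)"
    using assms by (subst sum.delta) auto
  finally show ?thesis by (simp add: algebra_simps)
qed

lemma R_Suc: assumes "1 \<le> i" "i < k" shows "R i = mu * (1 + R (Suc i))"
proof -
  have pw: "P i y = mu * P (Suc i) y + mu * (if y = Suc i then 1 else 0)" for y
  proof (cases "Suc i < y")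
    case True
    then have "y - i = Suc (y - Suc i)" by simp
    then show ?thesis using True by (simp add: P_def)
  next
    case False
    then show ?thesis by (cases "y = Suc i") (auto simp: P_def)
  qed
  have "R i = (\<Sum>y\<in>{1..k}. mu * P (Suc i) y + mu * (if y = Suc i then 1 else 0))"
    unfolding R_def using pw by simp
  also have "\<dots> = mu * R (Suc i) + mu * (\<Sum>y\<in>{1..k}. (if y = Suc i then 1 else 0))"
    unfolding R_def by (simp only: sum.distrib sum_distrib_left)
  also have "(\<Sum>y\<in>{1..k}. (if y = Suc i then 1 else 0)) = (1::real)"
    using assms by (subst sum.delta) auto
  finally show ?thesis by (simp add: algebra_simps)
qed

lemma G_Suc: "G (Suc n) = 1 + mu * G n"
  unfolding G_def by (simp only: sum.lessThan_Suc_shift sum_distrib_left power_Suc power_0)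

lemma G_nonneg: "0 \<le> G n"
  unfolding G_def using mu_ge1 by (intro sum_nonneg) simp

lemma G_add: "G (p + q) = G q + mu ^ q * G p"
proof (induction p)
  case 0
  then show ?case by (simp add: G_def)
next
  case (Suc p)
  have "G (Suc p + q) = G (p + q) + mu ^ (p + q)" by (simp add: G_def)
  also have "\<dots> = G q + mu ^ q * (G p + mu ^ p)" using Suc by (simp add: algebra_simps power_add)
  also have "G p + mu ^ p = G (Suc p)" by (simp add: G_def)
  finally show ?case .
qed

lemma G_super: "G p + G q \<le> G (p + q)"
proof -
  have "1 \<le> mu ^ q" using mu_ge1 by simp
  then have "1 * G p \<le> mu ^ q * G p" using G_nonneg[of p]
    by (intro mult_right_mono) auto
  then show ?thesis using G_add[of p q] by simp
qed

lemma A_closed: "Suc n \<le> k \<Longrightarrow> A (Suc n) = mu * G n"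
proof (induction n)
  case 0
  then show ?case using A_1 by (simp add: G_def)
next
  case (Suc n)
  then have "A (Suc (Suc n)) = mu * (A (Suc n) + 1)" by (intro A_Suc) auto
  also have "\<dots> = mu * (mu * G n + 1)" using Suc by simp
  also have "\<dots> = mu * G (Suc n)" by (simp add: G_Suc algebra_simps)
  finally show ?case .
qed

lemma R_closed: "k - i = n \<Longrightarrow> 1 \<le> i \<Longrightarrow> i \<le> k \<Longrightarrow> R i = mu * G n"
proof (induction n arbitrary: i)
  case 0
  then have "i = k" by simp
  then show ?case using R_k by (simp add: G_def)
next
  case (Suc n)
  then have "R i = mu * (1 + R (Suc i))" by (intro R_Suc) auto
  also have "R (Suc i) = mu * G n" using Suc by (intro Suc.IH) auto
  finally show ?case by (simp add: G_Suc)
qed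

lemma cc_le: assumes "1 \<le> i" "i \<le> k" shows "cc i \<le> G k"
proof -
  obtain n where n: "i = Suc n" using assms by (cases i) auto
  have a: "A i = mu * G (i - 1)" using A_closed[of n] n assms by simp
  have r: "R i = mu * G (k - i)" using R_closed assms by simp
  have gk: "G k = 1 + mu * G (k - 1)" using G_Suc[of "k - 1"] k1 by simp
  have "G (i - 1) + G (k - i) \<le> G ((i - 1) + (k - i))" by (rule G_super)
  also have "(i - 1) + (k - i) = k - 1" using assms by simp
  finally have "mu * (G (i - 1) + G (k - i)) \<le> mu * G (k - 1)"
    using mu_ge1 by (intro mult_left_mono) auto
  then show ?thesis unfolding cc_def a r gk by (simp add: algebra_simps)
qed

lemma Gk_pos: "0 < G k"
proof -
  have "G k = 1 + mu * G (k - 1)" using G_Suc[of "k - 1"] k1 by simp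
  moreover have "0 \<le> mu * G (k - 1)" using G_nonneg[of "k - 1"] mu_ge1 by simp
  ultimately show ?thesis by linarith
qed

end



declare upt_Suc[simp del]

context lk
begin

definition ordv :: "(nat \<Rightarrow> real) \<Rightarrow> nat \<Rightarrow> real" where
  "ordv q m = sort (map q [1..<Suc k]) ! (m - 1)"
definition Mp where "Mp s q = (\<Sum>m\<in>{1..k}. cc m * \<bar>s m - ordv q m\<bar>)"
definition Psi where "Psi s = (\<Sum>i\<in>{1..k}. kap i * s i)"
definition Phi where "Phi s q = Mp s q + Psi s"
definition sortedc :: "(nat \<Rightarrow> real) \<Rightarrow> bool" where "sortedc s \<longleftrightarrow> (\<forall>i. 1 \<le> i \<and> i < k \<longrightarrow> s i \<le> s (Suc i))"

lemma Psi_pairs: "Psi s = (\<Sum>x\<in>{1..k}. \<Sum>y\<in>{1..k}. P x y * (s y - s x))"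
proof -
  have "(\<Sum>x\<in>{1..k}. \<Sum>y\<in>{1..k}. P x y * (s y - s x))
     = (\<Sum>x\<in>{1..k}. \<Sum>y\<in>{1..k}. P x y * s y) - (\<Sum>x\<in>{1..k}. \<Sum>y\<in>{1..k}. P x y * s x)"
    by (simp add: right_diff_distrib sum_subtractf)
  also have "(\<Sum>x\<in>{1..k}. \<Sum>y\<in>{1..k}. P x y * s y) = (\<Sum>y\<in>{1..k}. A y * s y)"
    unfolding A_def by (subst sum.swap) (simp add: sum_distrib_right)
  also have "(\<Sum>x\<in>{1..k}. \<Sum>y\<in>{1..k}. P x y * s x) = (\<Sum>x\<in>{1..k}. R x * s x)"
    unfolding R_def by (simp add: sum_distrib_right)
  finally show ?thesis unfolding Psi_def kap_def by (simp add: left_diff_distrib sum_subtractf)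
qed

lemma sortedc_mono:
  "sortedc s \<Longrightarrow> 1 \<le> x \<Longrightarrow> x \<le> y \<Longrightarrow> y \<le> k \<Longrightarrow> s x \<le> s y"
proof (induction y)
  case 0
  then show ?case by simp
next
  case (Suc y)
  show ?case
  proof (cases "x = Suc y")
    case True
    then show ?thesis by simp
  next
    case False
    then have "s x \<le> s y" using Suc by simp
    moreover have "s y \<le> s (Suc y)" using Suc False unfolding sortedc_def by simp
    ultimately show ?thesis by simp
  qed
qed

lemma Psi_nonneg: assumes "sortedc s" shows "0 \<le> Psi s"
  unfolding Psi_pairs
proof (intro sum_nonneg)
  fix x y assume xy: "x \<in> {1..k}" "y \<in> {1..k}"
  show "0 \<le> P x y * (s y - s x)"
  proof (cases "x < y")
    case True
    then have "s x \<le> s y" using sortedc_mono[OF assms, of x y] xy by auto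
    then show ?thesis using P_nonneg[of x y] by simp
  next
    case False
    then show ?thesis by (simp add: P_def)
  qed
qed

lemma Mp_nonneg: "0 \<le> Mp s q"
  unfolding Mp_def using cc_nonneg by (intro sum_nonneg) simp

lemma Phi_nonneg: "sortedc s \<Longrightarrow> 0 \<le> Phi s q"
  unfolding Phi_def using Mp_nonneg Psi_nonneg by (simp add: add_nonneg_nonneg)

lemma nth_upt1: "i < k \<Longrightarrow> [1..<Suc k] ! i = Suc i"
  by simp

lemma sortedc_sorted: assumes "sortedc s" shows "sorted (map s [1..<Suc k])"
  unfolding sorted_iff_nth_Suc
proof (intro allI impI)
  fix i assume "Suc i < length (map s [1..<Suc k])"
  then have "Suc i < k" by simp
  then show "map s [1..<Suc k] ! i \<le> map s [1..<Suc k] ! Suc i"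
    using assms unfolding sortedc_def by (simp add: nth_upt1)
qed

lemma ordv_sorted: assumes "sortedc s" "m \<in> {1..k}" shows "ordv s m = s m"
proof -
  have "sort (map s [1..<Suc k]) = map s [1..<Suc k]"
    using sortedc_sorted[OF assms(1)] by (rule sorted_sort_id)
  moreover have "[1..<Suc k] ! (m - 1) = m" using assms(2) by (subst nth_upt) auto
  moreover have "m - 1 < k" using assms(2) by auto
  ultimately show ?thesis unfolding ordv_def by simp
qed

lemma Mp_self: "sortedc s \<Longrightarrow> Mp s s = 0"
  unfolding Mp_def by (simp add: ordv_sorted)

lemma ordv_cong: "(\<And>j. j \<in> {1..k} \<Longrightarrow> q j = q' j) \<Longrightarrow> ordv q = ordv q'"
proof -
  assume h: "\<And>j. j \<in> {1..k} \<Longrightarrow> q j = q' j"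
  have eq: "map q [1..<Suc k] = map q' [1..<Suc k]"
    by (rule map_cong) (auto intro: h)
  show ?thesis by (intro ext) (simp only: ordv_def eq)
qed

lemma sum1k: "(\<Sum>m\<in>{1..k}. f m) = (\<Sum>i<k. f (Suc i))"
  using sum.atLeast1_atMost_eq[of f k] by simp

lemma Mp_lip: "Mp s q' \<le> Mp s q + G k * config_dist k q q'"
proof -
  let ?L = "map q [1..<Suc k]" and ?L' = "map q' [1..<Suc k]"
  have "Mp s q' - Mp s q = (\<Sum>m\<in>{1..k}. cc m * (\<bar>s m - ordv q' m\<bar> - \<bar>s m - ordv q m\<bar>))"
    unfolding Mp_def by (simp add: sum_subtractf right_diff_distrib)
  also have "\<dots> \<le> (\<Sum>m\<in>{1..k}. G k * \<bar>ordv q' m - ordv q m\<bar>)"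
  proof (intro sum_mono)
    fix m assume m: "m \<in> {1..k}"
    have "cc m * (\<bar>s m - ordv q' m\<bar> - \<bar>s m - ordv q m\<bar>) \<le> cc m * \<bar>ordv q' m - ordv q m\<bar>"
      using cc_nonneg[of m] by (intro mult_left_mono) auto
    also have "\<dots> \<le> G k * \<bar>ordv q' m - ordv q m\<bar>"
      using cc_le[of m] m by (intro mult_right_mono) auto
    finally show "cc m * (\<bar>s m - ordv q' m\<bar> - \<bar>s m - ordv q m\<bar>) \<le> G k * \<bar>ordv q' m - ordv q m\<bar>" .
  qed
  also have "(\<Sum>m\<in>{1..k}. G k * \<bar>ordv q' m - ordv q m\<bar>) = G k * ld (sort ?L') (sort ?L)"
    unfolding ld_def sum_distrib_left[symmetric] sum1k ordv_def by simp
  also have "\<dots> \<le> G k * ld ?L' ?L"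
    using Gk_pos by (intro mult_left_mono sort_ld) auto
  also have "ld ?L' ?L = config_dist k q q'"
    unfolding ld_def config_dist_def sum1k by (simp add: nth_upt1)
  finally show ?thesis by simp
qed

end


context lk
begin

definition T :: "(nat \<Rightarrow> real) \<Rightarrow> (nat \<Rightarrow> real) \<Rightarrow> (nat \<Rightarrow> real) \<Rightarrow> nat \<Rightarrow> real" where
  "T s s' q j = \<bar>s' j - s j\<bar> + cc j * \<bar>s' j - ordv q j\<bar> + kap j * s' j
                - cc j * \<bar>s j - ordv q j\<bar> - kap j * s j"

lemma T_sum: "config_dist k s s' + Phi s' q - Phi s q = (\<Sum>j\<in>{1..k}. T s s' q j)"
proof -
  have "(\<Sum>j\<in>{1..k}. T s s' q j) = (\<Sum>j\<in>{1..k}. \<bar>s' j - s j\<bar>) + (\<Sum>j\<in>{1..k}. cc j * \<bar>s' j - ordv q j\<bar>)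
     + (\<Sum>j\<in>{1..k}. kap j * s' j) - (\<Sum>j\<in>{1..k}. cc j * \<bar>s j - ordv q j\<bar>) - (\<Sum>j\<in>{1..k}. kap j * s j)"
    unfolding T_def by (simp only: sum.distrib sum_subtractf)
  then show ?thesis unfolding config_dist_def Phi_def Mp_def Psi_def by linarith
qed

lemma T_zero: "s' j = s j \<Longrightarrow> T s s' q j = 0"
  unfolding T_def by simp

lemma sum_one:
  assumes "i \<in> {1..k}" "\<forall>j\<in>{1..k}. j \<noteq> i \<longrightarrow> f j = (0::real)"
  shows "sum f {1..k} = f i"
proof -
  have "sum f {1..k} = sum f {i}"
    by (rule sum.mono_neutral_right) (use assms in auto)
  then show ?thesis by simp
qed

lemma sum_two:
  assumes "i \<in> {1..k}" "Suc i \<in> {1..k}" "\<forall>j\<in>{1..k}. j \<noteq> i \<and> j \<noteq> Suc i \<longrightarrow> f j = (0::real)"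
  shows "sum f {1..k} = f i + f (Suc i)"
proof -
  have "sum f {1..k} = sum f {i, Suc i}"
    by (rule sum.mono_neutral_right) (use assms in auto)
  then show ?thesis by simp
qed

lemma ordv_mono: "1 \<le> m \<Longrightarrow> m \<le> m' \<Longrightarrow> m' \<le> k \<Longrightarrow> ordv q m \<le> ordv q m'"
  unfolding ordv_def by (intro sorted_nth_mono) auto

lemma ordv_hit: assumes "j \<in> {1..k}" "q j = r" shows "\<exists>m\<in>{1..k}. ordv q m = r"
proof -
  have "r \<in> set (map q [1..<Suc k])" using assms by auto
  then have "r \<in> set (sort (map q [1..<Suc k]))" by simp
  then obtain n where n0: "n < length (sort (map q [1..<Suc k]))" "sort (map q [1..<Suc k]) ! n = r"
    unfolding in_set_conv_nth by blast
  then have n: "n < k" "sort (map q [1..<Suc k]) ! n = r" by auto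
  then have "ordv q (Suc n) = r" unfolding ordv_def by simp
  then show ?thesis using n by (intro bexI[of _ "Suc n"]) auto
qed

lemma step_left:
  assumes sc: "sortedc s" and r: "r < s 1" and j: "j \<in> {1..k}" "q j = r"
  shows "sortedc (s(1 := r)) \<and> (\<Sum>j\<in>{1..k}. T s (s(1 := r)) q j) \<le> 0"
proof
  show "sortedc (s(1 := r))"
    unfolding sortedc_def
  proof (intro allI impI)
    fix i assume i: "1 \<le> i \<and> i < k"
    show "(s(1 := r)) i \<le> (s(1 := r)) (Suc i)"
      using sc[unfolded sortedc_def, rule_format, of i] i r by auto
  qed
  obtain m where m: "m \<in> {1..k}" "ordv q m = r" using ordv_hit[of j q r] j by blast
  have o1: "ordv q 1 \<le> r" using ordv_mono[of 1 m q] m by auto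
  have "(\<Sum>j\<in>{1..k}. T s (s(1 := r)) q j) = T s (s(1 := r)) q 1"
    using k1 by (intro sum_one) (auto intro: T_zero)
  also have "\<dots> = (s 1 - r) * (1 - cc 1 - kap 1)"
    unfolding T_def using o1 r by (simp add: algebra_simps)
  also have "1 - cc 1 - kap 1 = 0" unfolding cc_def kap_def A_1 by simp
  finally show "(\<Sum>j\<in>{1..k}. T s (s(1 := r)) q j) \<le> 0" by (simp only: mult_zero_right order_refl)
qed

lemma step_right:
  assumes sc: "sortedc s" and r: "s k < r" and j: "j \<in> {1..k}" "q j = r"
  shows "sortedc (s(k := r)) \<and> (\<Sum>j\<in>{1..k}. T s (s(k := r)) q j) \<le> 0"
proof
  show "sortedc (s(k := r))"
    unfolding sortedc_def
  proof (intro allI impI)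
    fix i assume i: "1 \<le> i \<and> i < k"
    show "(s(k := r)) i \<le> (s(k := r)) (Suc i)"
      using sc[unfolded sortedc_def, rule_format, of i] i r by auto
  qed
  obtain m where m: "m \<in> {1..k}" "ordv q m = r" using ordv_hit[of j q r] j by blast
  have o1: "r \<le> ordv q k" using ordv_mono[of m k q] m by auto
  have "(\<Sum>j\<in>{1..k}. T s (s(k := r)) q j) = T s (s(k := r)) q k"
    using k1 by (intro sum_one) (auto intro: T_zero)
  also have "\<dots> = (r - s k) * (1 - cc k + kap k)"
    unfolding T_def using o1 r by (simp add: algebra_simps)
  also have "1 - cc k + kap k = 0" unfolding cc_def kap_def R_k by simp
  finally show "(\<Sum>j\<in>{1..k}. T s (s(k := r)) q j) \<le> 0" by (simp only: mult_zero_right order_refl)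
qed

lemma step_mid:
  assumes sc: "sortedc s" and i: "1 \<le> i" "i < k" and r: "s i < r" "r < s (Suc i)"
    and ab: "0 \<le> a" "0 \<le> b" "a \<le> r - s i" "b \<le> s (Suc i) - r" "lam * a \<le> b" "lam * b \<le> a"
    and ord: "r \<le> ordv q i \<or> ordv q (Suc i) \<le> r"
    and s': "s' = s(i := s i + a, Suc i := s (Suc i) - b)"
  shows "sortedc s' \<and> (\<Sum>j\<in>{1..k}. T s s' q j) \<le> 0"
proof
  have si: "s' i = s i + a" and ssi: "s' (Suc i) = s (Suc i) - b" using s' by auto
  have oth: "j \<noteq> i \<Longrightarrow> j \<noteq> Suc i \<Longrightarrow> s' j = s j" for j using s' by auto
  show "sortedc s'"
    unfolding sortedc_def
  proof (intro allI impI)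
    fix j assume j: "1 \<le> j \<and> j < k"
    have h: "s j \<le> s (Suc j)" using sc[unfolded sortedc_def, rule_format, of j] j by auto
    show "s' j \<le> s' (Suc j)"
    proof (cases "j = i")
      case True
      then show ?thesis using si ssi ab by simp
    next
      case ji: False
      show ?thesis
      proof (cases "j = Suc i")
        case True
        then show ?thesis using ssi oth[of "Suc j"] h ab by simp
      next
        case False
        then show ?thesis
        proof (cases "Suc j = i")
          case True
          then show ?thesis using si oth[of j] h ab ji False by simp
        next
          case False2: False
          then show ?thesis using oth[of j] oth[of "Suc j"] h ji False by simp
        qed
      qed
    qed
  qed
  have bm: "b \<le> mu * a"
  proof -
    have "mu * (lam * b) \<le> mu * a" using ab mu_ge1 by (intro mult_left_mono) auto
    then show ?thesis using mu_lam by (simp add: mult.assoc[symmetric])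
  qed
  have am: "a \<le> mu * b"
  proof -
    have "mu * (lam * a) \<le> mu * b" using ab mu_ge1 by (intro mult_left_mono) auto
    then show ?thesis using mu_lam by (simp add: mult.assoc[symmetric])
  qed
  have iS: "i \<in> {1..k}" "Suc i \<in> {1..k}" using i by auto
  have sum2: "(\<Sum>j\<in>{1..k}. T s s' q j) = T s s' q i + T s s' q (Suc i)"
    using iS by (intro sum_two) (auto intro: T_zero oth)
  have As: "A (Suc i) = mu * (A i + 1)" using A_Suc i by simp
  have Rs: "R i = mu * (1 + R (Suc i))" using R_Suc i by simp
  have ccn1: "0 \<le> cc i" "0 \<le> cc (Suc i)" using cc_nonneg by auto
  let ?O1 = "ordv q i" and ?O2 = "ordv q (Suc i)"
  from ord show "(\<Sum>j\<in>{1..k}. T s s' q j) \<le> 0"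
  proof
    assume o: "r \<le> ?O1"
    have t1: "T s s' q i = a * (1 - cc i + kap i)"
    proof -
      have "\<bar>s' i - s i\<bar> = a" "\<bar>s' i - ?O1\<bar> = ?O1 - s i - a" "\<bar>s i - ?O1\<bar> = ?O1 - s i"
        using si o ab r by auto
      then show ?thesis unfolding T_def si by (simp add: algebra_simps)
    qed
    have t2: "T s s' q (Suc i) \<le> b * (1 + cc (Suc i) - kap (Suc i))"
    proof -
      have e: "\<bar>s' (Suc i) - s (Suc i)\<bar> = b" using ssi ab by simp
      have "\<bar>s' (Suc i) - ?O2\<bar> \<le> \<bar>s (Suc i) - ?O2\<bar> + b" using ssi ab by simp
      then have "cc (Suc i) * \<bar>s' (Suc i) - ?O2\<bar> \<le> cc (Suc i) * (\<bar>s (Suc i) - ?O2\<bar> + b)"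
        using ccn1 by (intro mult_left_mono) auto
      then show ?thesis unfolding T_def e ssi using ab by (simp add: algebra_simps)
    qed
    have "a * (1 - cc i + kap i) + b * (1 + cc (Suc i) - kap (Suc i))
        = 2 * (1 + R (Suc i)) * (b - mu * a)"
      unfolding cc_def kap_def Rs by (simp add: algebra_simps)
    also have "\<dots> \<le> 0" using R_nonneg[of "Suc i"] bm
      by (intro mult_nonneg_nonpos) auto
    finally show ?thesis using sum2 t1 t2 by linarith
  next
    assume o: "?O2 \<le> r"
    have t2: "T s s' q (Suc i) = b * (1 - cc (Suc i) - kap (Suc i))"
    proof -
      have "\<bar>s' (Suc i) - s (Suc i)\<bar> = b" "\<bar>s' (Suc i) - ?O2\<bar> = s (Suc i) - b - ?O2"
        "\<bar>s (Suc i) - ?O2\<bar> = s (Suc i) - ?O2"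
        using ssi o ab r by auto
      then show ?thesis unfolding T_def ssi by (simp add: algebra_simps)
    qed
    have t1: "T s s' q i \<le> a * (1 + cc i + kap i)"
    proof -
      have e: "\<bar>s' i - s i\<bar> = a" using si ab by simp
      have "\<bar>s' i - ?O1\<bar> \<le> \<bar>s i - ?O1\<bar> + a" using si ab by simp
      then have "cc i * \<bar>s' i - ?O1\<bar> \<le> cc i * (\<bar>s i - ?O1\<bar> + a)"
        using ccn1 by (intro mult_left_mono) auto
      then show ?thesis unfolding T_def e si using ab by (simp add: algebra_simps)
    qed
    have "a * (1 + cc i + kap i) + b * (1 - cc (Suc i) - kap (Suc i))
        = 2 * (1 + A i) * (a - mu * b)"
      unfolding cc_def kap_def As by (simp add: algebra_simps)
    also have "\<dots> \<le> 0" using A_nonneg[of i] am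
      by (intro mult_nonneg_nonpos) auto
    finally show ?thesis using sum2 t1 t2 by linarith
  qed
qed

end


context lk
begin

lemma ord_split:
  assumes "j \<in> {1..k}" "q j = r" "1 \<le> i" "i < k"
  shows "r \<le> ordv q i \<or> ordv q (Suc i) \<le> r"
proof (rule disjCI)
  assume "\<not> ordv q (Suc i) \<le> r"
  obtain m where m: "m \<in> {1..k}" "ordv q m = r" using ordv_hit[of j q r] assms by blast
  show "r \<le> ordv q i"
  proof (cases "m \<le> i")
    case True
    then show ?thesis using ordv_mono[of m i q] m assms by auto
  next
    case False
    then have "ordv q (Suc i) \<le> ordv q m" using ordv_mono[of "Suc i" m q] m by auto
    then show ?thesis using m \<open>\<not> ordv q (Suc i) \<le> r\<close> by simp
  qed
qed

lemma step:
  assumes sc: "sortedc s" and j: "j \<in> {1..k}" "q j = r"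
  shows "sortedc (lambda_dc_step lam k s r p) \<and>
         config_dist k s (lambda_dc_step lam k s r p) + Phi (lambda_dc_step lam k s r p) q \<le> Phi s q"
proof -
  define s' where "s' = lambda_dc_step lam k s r p"
  have main: "sortedc s' \<and> (\<Sum>j\<in>{1..k}. T s s' q j) \<le> 0"
  proof (cases "r < s 1")
    case True
    then have "s' = s(1 := r)" unfolding s'_def lambda_dc_step_def by simp
    then show ?thesis using step_left[of s r j q] sc True j by simp
  next
    case c1: False
    show ?thesis
    proof (cases "s k < r")
      case True
      then have "s' = s(k := r)" unfolding s'_def lambda_dc_step_def using c1 by simp
      then show ?thesis using step_right[of s r j q] sc True j by simp
    next
      case c2: False
      show ?thesis
      proof (cases "\<exists>i. 1 \<le> i \<and> i < k \<and> s i < r \<and> r < s (Suc i)")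
        case ex: True
        define i where "i = (LEAST i. 1 \<le> i \<and> i < k \<and> s i < r \<and> r < s (Suc i))"
        have ip: "1 \<le> i \<and> i < k \<and> s i < r \<and> r < s (Suc i)"
          unfolding i_def using ex by (rule LeastI_ex)
        have os: "r \<le> ordv q i \<or> ordv q (Suc i) \<le> r" using ord_split[of j q r i] j ip by auto
        have ll: "lam * lam \<le> 1" using lp l1 by (simp add: mult_le_one)
        show ?thesis
        proof (cases "p \<le> i")
          case True
          define t where "t = min (r - s i) ((s (Suc i) - r) / lam)"
          have s'e: "s' = s(i := s i + t, Suc i := s (Suc i) - lam * t)"
            unfolding s'_def lambda_dc_step_def using c1 c2 ex True
            by (simp add: Let_def t_def i_def)
          have t0: "0 \<le> t" unfolding t_def using ip lp by simp
          have t1: "t \<le> r - s i" unfolding t_def by simp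
          have "t \<le> (s (Suc i) - r) / lam" unfolding t_def by simp
          then have t2: "lam * t \<le> s (Suc i) - r" using lp by (simp add: le_divide_eq mult.commute)
          have t3: "lam * (lam * t) \<le> t"
            using mult_right_mono[OF ll t0] by (simp add: mult.assoc)
          show ?thesis
            by (rule step_mid[OF sc _ _ _ _ _ _ t1 t2 _ t3 os s'e]) (use ip t0 lp in auto)
        next
          case False
          define t where "t = min ((r - s i) / lam) (s (Suc i) - r)"
          have s'e: "s' = s(i := s i + lam * t, Suc i := s (Suc i) - t)"
            unfolding s'_def lambda_dc_step_def using c1 c2 ex False
            by (simp add: Let_def t_def i_def)
          have t0: "0 \<le> t" unfolding t_def using ip lp by simp
          have t1: "t \<le> s (Suc i) - r" unfolding t_def by simp
          have "t \<le> (r - s i) / lam" unfolding t_def by simp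
          then have t2: "lam * t \<le> r - s i" using lp by (simp add: le_divide_eq mult.commute)
          have t3: "lam * (lam * t) \<le> t"
            using mult_right_mono[OF ll t0] by (simp add: mult.assoc)
          show ?thesis
            by (rule step_mid[OF sc _ _ _ _ _ _ t2 t1 t3 _ os s'e]) (use ip t0 lp in auto)
        qed
      next
        case False
        then have "s' = s" unfolding s'_def lambda_dc_step_def
          by (subst if_not_P[OF c1], subst if_not_P[OF c2], subst if_not_P[OF False]) (rule refl)
        then show ?thesis using sc by (simp add: T_zero)
      qed
    qed
  qed
  then show ?thesis using T_sum[of s s' q] unfolding s'_def by linarith
qed

lemma main:
  "sortedc s \<Longrightarrow> (\<forall>t\<in>{1..length I}. \<exists>j\<in>{1..k}. C t j = fst (I ! (t - 1))) \<Longrightarrow>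
   lambda_dc_cost lam k s I \<le> G k * (\<Sum>t\<in>{1..length I}. config_dist k (C (t - 1)) (C t)) + Phi s (C 0)"
proof (induction I arbitrary: s C)
  case Nil
  then show ?case using Phi_nonneg by simp
next
  case (Cons x I)
  obtain r p where x: "x = (r, p)" by (cases x)
  define s' where "s' = lambda_dc_step lam k s r p"
  have one: "1 \<in> {1..length (x # I)}" by simp
  obtain j where j0: "j \<in> {1..k}" "C 1 j = fst ((x # I) ! (1 - 1))"
    using bspec[OF Cons.prems(2) one] by blast
  then have j: "j \<in> {1..k}" "C 1 j = r" using x by auto
  have st: "sortedc s' \<and> config_dist k s s' + Phi s' (C 1) \<le> Phi s (C 1)"
    unfolding s'_def using step[of s j "C 1" r p] Cons.prems(1) j by blast
  have hyp: "\<forall>t\<in>{1..length I}. \<exists>j\<in>{1..k}. C (Suc t) j = fst (I ! (t - 1))"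
  proof
    fix t assume t: "t \<in> {1..length I}"
    then have "Suc t \<in> {1..length (x # I)}" by simp
    then obtain j where "j \<in> {1..k}" "C (Suc t) j = fst ((x # I) ! (Suc t - 1))"
      using Cons.prems(2) by blast
    moreover have "(x # I) ! (Suc t - 1) = I ! (t - 1)" using t by (cases t) auto
    ultimately show "\<exists>j\<in>{1..k}. C (Suc t) j = fst (I ! (t - 1))" by auto
  qed
  have IH: "lambda_dc_cost lam k s' I \<le> G k * (\<Sum>t\<in>{1..length I}. config_dist k (C (Suc (t - 1))) (C (Suc t))) + Phi s' (C (Suc 0))"
    using Cons.IH[of s' "\<lambda>t. C (Suc t)"] st hyp by simp
  have sumeq: "(\<Sum>t\<in>{1..length I}. config_dist k (C (Suc (t - 1))) (C (Suc t)))
      = (\<Sum>t\<in>{1..length I}. config_dist k (C t) (C (Suc t)))"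
    by (intro sum.cong) auto
  have "(\<Sum>t\<in>{1..Suc (length I)}. config_dist k (C (t - 1)) (C t))
      = config_dist k (C (1 - 1)) (C 1) + (\<Sum>t\<in>{Suc 1..Suc (length I)}. config_dist k (C (t - 1)) (C t))"
    by (rule sum.atLeast_Suc_atMost) simp
  then have "(\<Sum>t\<in>{1..length (x # I)}. config_dist k (C (t - 1)) (C t))
      = config_dist k (C 0) (C 1) + (\<Sum>t\<in>{Suc 1..Suc (length I)}. config_dist k (C (t - 1)) (C t))"
    by simp
  also have "(\<Sum>t\<in>{Suc 1..Suc (length I)}. config_dist k (C (t - 1)) (C t))
      = (\<Sum>t\<in>{1..length I}. config_dist k (C t) (C (Suc t)))"
    by (simp only: sum.shift_bounds_cl_Suc_ivl) simp
  finally have sx: "(\<Sum>t\<in>{1..length (x # I)}. config_dist k (C (t - 1)) (C t))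
      = config_dist k (C 0) (C 1) + (\<Sum>t\<in>{1..length I}. config_dist k (C t) (C (Suc t)))" .
  have lip: "Phi s (C 1) \<le> Phi s (C 0) + G k * config_dist k (C 0) (C 1)"
    unfolding Phi_def using Mp_lip[of s "C 1" "C 0"] by simp
  have "lambda_dc_cost lam k s (x # I) = config_dist k s s' + lambda_dc_cost lam k s' I"
    unfolding x s'_def by (simp add: Let_def)
  then show ?case using IH sumeq sx lip st
    by (simp add: distrib_left)
qed

end

theorem lemma9:
  fixes k :: nat and lam :: real and s0 :: "nat \<Rightarrow> real"
  assumes "1 \<le> k" and "0 < lam" and "lam \<le> 1"
    and "\<forall>i. 1 \<le> i \<and> i < k \<longrightarrow> s0 i \<le> s0 (Suc i)"
  shows "\<exists>c\<ge>0. \<forall>I :: (real \<times> nat) list.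
           (\<forall>x\<in>set I. snd x \<in> {1..k}) \<longrightarrow>
           lambda_dc_cost lam k s0 I
             \<le> (\<Sum>i<k. inverse lam ^ i) * opt_cost k s0 (map fst I) + c"
proof -
  interpret lk k lam using assms by unfold_locales auto
  have sc: "sortedc s0" unfolding sortedc_def using assms(4) by blast
  have Gk: "G k = (\<Sum>i<k. inverse lam ^ i)" unfolding G_def mu_def by simp
  show ?thesis
  proof (intro exI[of _ "Psi s0"] conjI allI impI)
    show "0 \<le> Psi s0" using Psi_nonneg[OF sc] .
    fix I :: "(real \<times> nat) list"
    let ?rs = "map fst I" and ?n = "length I"
    let ?X = "{schedule_cost k (length ?rs) C | C. valid_schedule k s0 ?rs C}"
    have bound: "lambda_dc_cost lam k s0 I \<le> G k * x + Psi s0" if "x \<in> ?X" for x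
    proof -
      obtain C where C: "x = schedule_cost k (length ?rs) C" "valid_schedule k s0 ?rs C"
        using \<open>x \<in> ?X\<close> by blast
      have hyp: "\<forall>t\<in>{1..length I}. \<exists>j\<in>{1..k}. C t j = fst (I ! (t - 1))"
      proof
        fix t assume t: "t \<in> {1..length I}"
        then have t': "t \<in> {1..length ?rs}" by simp
        obtain j where "j \<in> {1..k}" "C t j = ?rs ! (t - 1)"
          using C(2) t' unfolding valid_schedule_def by blast
        moreover have "t - 1 < length I" using t by auto
        then have "?rs ! (t - 1) = fst (I ! (t - 1))" by (rule nth_map)
        ultimately show "\<exists>j\<in>{1..k}. C t j = fst (I ! (t - 1))" by auto
      qed
      have "ordv (C 0) = ordv s0"
        using C(2) unfolding valid_schedule_def by (intro ordv_cong) auto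
      then have "Phi s0 (C 0) = Psi s0" unfolding Phi_def Mp_def
        using Mp_self[OF sc] unfolding Mp_def by simp
      then show ?thesis using main[OF sc hyp] C(1) unfolding schedule_cost_def by simp
    qed
    define C0 where "C0 = (\<lambda>t (j::nat). if t = 0 then s0 j else ?rs ! (t - 1))"
    have "valid_schedule k s0 ?rs C0" unfolding valid_schedule_def C0_def using assms(1) by auto
    then have ne: "?X \<noteq> {}" by blast
    have "(lambda_dc_cost lam k s0 I - Psi s0) / G k \<le> Inf ?X"
    proof (rule cInf_greatest[OF ne])
      fix x assume "x \<in> ?X"
      then show "(lambda_dc_cost lam k s0 I - Psi s0) / G k \<le> x"
        using bound[of x] Gk_pos by (simp add: divide_le_eq mult.commute)
    qed
    then have "lambda_dc_cost lam k s0 I \<le> G k * Inf ?X + Psi s0"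
      using Gk_pos by (simp add: divide_le_eq mult.commute)
    then show "lambda_dc_cost lam k s0 I \<le> (\<Sum>i<k. inverse lam ^ i) * opt_cost k s0 (map fst I) + Psi s0"
      unfolding opt_cost_def Gk by simp
  qed
qed

end
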